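(* Suppose $T$ has the f.s. dichotomy, and let $\bar a,\bar b$ be finite tuples, $c$ a singleton, and $M\preceq\mathbb{C}$ a small model. (1) If $\mathrm{tp}(\bar a/Mc)$ and $\mathrm{tp}(c/M\bar b)$ are both not finitely satisfied in $M$, then $\mathrm{tp}(\bar a/M\bar b)$ is not finitely satisfied in $M$. (2) $\mathrm{tp}(\bar a/M\bar b)$ is finitely satisfied in $M$ iff $\mathrm{tp}(a/M\bar b)$ is finitely satisfied in $M$ for every element $a$ of $\bar a$. (3) If $C\supseteq M$ is full, then $\mathrm{tp}(\bar a/C\bar b)$ is finitely satisfied in $M$ iff $\mathrm{tp}(a/Cb)$ is finitely satisfied in $M$ for every element $a$ of $\bar a$ and every element $b$ of $\bar b$.
   Context: Work in a monster model $\mathbb{C}$ of $T$. For $B\supseteq M$, $\mathrm{tp}(A/B)$ is finitely satisfied in $M$ if each of its formulas is satisfied by a tuple from $M$. $T$ has the f.s. dichotomy if for every small model $M$ and finite tuples $\bar a,\bar b$ with $\mathrm{tp}(\bar b/M\bar a)$ finitely satisfied in $M$, for every singleton $c$ either $\mathrm{tp}(\bar b/M\bar ac)$ or $\mathrm{tp}(\bar bc/M\bar a)$ is finitely satisfied in $M$. A set $C\supseteq M$ is full if every type in $S_n(M)$, for every $n$, is realized in $C$. *)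

theory Defs
  imports Main "HOL-Library.Equipollence"
begin

datatype 'f trm = Var nat | Fn 'f "'f trm list"

datatype ('f, 'r) fml =
    FTrue
  | Eq "'f trm" "'f trm"
  | Rel 'r "'f trm list"
  | Neg "('f, 'r) fml"
  | Conj "('f, 'r) fml" "('f, 'r) fml"
  | Ex nat "('f, 'r) fml"

fun fv_trm :: "'f trm \<Rightarrow> nat set" where
  "fv_trm (Var i) = {i}"
| "fv_trm (Fn f ts) = (\<Union>t\<in>set ts. fv_trm t)"

fun fv :: "('f, 'r) fml \<Rightarrow> nat set" where
  "fv FTrue = {}"
| "fv (Eq s t) = fv_trm s \<union> fv_trm t"
| "fv (Rel r ts) = (\<Union>t\<in>set ts. fv_trm t)"
| "fv (Neg \<phi>) = fv \<phi>"
| "fv (Conj \<phi> \<psi>) = fv \<phi> \<union> fv \<psi>"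
| "fv (Ex x \<phi>) = fv \<phi> - {x}"

record ('a, 'f, 'r) struc =
  univ :: "'a set"
  funs :: "'f \<Rightarrow> 'a list \<Rightarrow> 'a"
  rels :: "'r \<Rightarrow> 'a list \<Rightarrow> bool"

fun eval :: "('a, 'f, 'r) struc \<Rightarrow> (nat \<Rightarrow> 'a) \<Rightarrow> 'f trm \<Rightarrow> 'a" where
  "eval S e (Var i) = e i"
| "eval S e (Fn f ts) = funs S f (map (eval S e) ts)"

fun sat :: "('a, 'f, 'r) struc \<Rightarrow> (nat \<Rightarrow> 'a) \<Rightarrow> ('f, 'r) fml \<Rightarrow> bool" where
  "sat S e FTrue = True"
| "sat S e (Eq s t) = (eval S e s = eval S e t)"
| "sat S e (Rel r ts) = rels S r (map (eval S e) ts)"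
| "sat S e (Neg \<phi>) = (\<not> sat S e \<phi>)"
| "sat S e (Conj \<phi> \<psi>) = (sat S e \<phi> \<and> sat S e \<psi>)"
| "sat S e (Ex x \<phi>) = (\<exists>a\<in>univ S. sat S (e(x := a)) \<phi>)"

definition is_structure :: "('a, 'f, 'r) struc \<Rightarrow> bool" where
  "is_structure S \<longleftrightarrow> univ S \<noteq> {} \<and>
     (\<forall>f xs. set xs \<subseteq> univ S \<longrightarrow> funs S f xs \<in> univ S)"

definition lenv :: "'a list \<Rightarrow> nat \<Rightarrow> 'a" where
  "lenv xs i = (if i < length xs then xs ! i else undefined)"

text \<open>An L(B)-formula in the variables x_0..x_(n-1) is a pair (phi, ps) where ps is a finite
  list of parameters from B substituted for the variables x_n, x_(n+1), ...\<close>
definition lformulas :: "nat \<Rightarrow> 'a set \<Rightarrow> (('f, 'r) fml \<times> 'a list) set" where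
  "lformulas n B = {(\<phi>, ps). set ps \<subseteq> B \<and> fv \<phi> \<subseteq> {..<n + length ps}}"

definition tp :: "('a, 'f, 'r) struc \<Rightarrow> 'a list \<Rightarrow> 'a set \<Rightarrow> (('f, 'r) fml \<times> 'a list) set" where
  "tp C xs B = {(\<phi>, ps) \<in> lformulas (length xs) B. sat C (lenv (xs @ ps)) \<phi>}"

definition realizes :: "('a, 'f, 'r) struc \<Rightarrow> 'a list \<Rightarrow> (('f, 'r) fml \<times> 'a list) set \<Rightarrow> bool" where
  "realizes C ys p \<longleftrightarrow> (\<forall>(\<phi>, ps)\<in>p. sat C (lenv (ys @ ps)) \<phi>)"

definition fin_sat :: "('a, 'f, 'r) struc \<Rightarrow> 'a set \<Rightarrow> 'a list \<Rightarrow> 'a set \<Rightarrow> bool" where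
  "fin_sat C M xs B \<longleftrightarrow>
     (\<forall>(\<phi>, ps)\<in>tp C xs B. \<exists>ys. length ys = length xs \<and> set ys \<subseteq> M \<and> sat C (lenv (ys @ ps)) \<phi>)"

definition elem_sub :: "('a, 'f, 'r) struc \<Rightarrow> 'a set \<Rightarrow> bool" where
  "elem_sub C M \<longleftrightarrow> M \<noteq> {} \<and> M \<subseteq> univ C \<and>
     (\<forall>f xs. set xs \<subseteq> M \<longrightarrow> funs C f xs \<in> M) \<and>
     (\<forall>\<phi> e. range e \<subseteq> M \<longrightarrow> (sat (C\<lparr>univ := M\<rparr>) e \<phi> \<longleftrightarrow> sat C e \<phi>))"

text \<open>Smallness relative to the saturation cardinal, represented by a set K: |A| < |K|.\<close>
definition small :: "'k set \<Rightarrow> 'a set \<Rightarrow> bool" where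
  "small K A \<longleftrightarrow> \<not> (K \<lesssim> A)"

text \<open>p is a partial n-type over A finitely satisfiable in C (i.e. consistent with Th(C_A)).\<close>
definition fs_partial_type :: "('a, 'f, 'r) struc \<Rightarrow> nat \<Rightarrow> 'a set \<Rightarrow> (('f, 'r) fml \<times> 'a list) set \<Rightarrow> bool" where
  "fs_partial_type C n A p \<longleftrightarrow> p \<subseteq> lformulas n A \<and>
     (\<forall>q\<subseteq>p. finite q \<longrightarrow> (\<exists>ys. length ys = n \<and> set ys \<subseteq> univ C \<and> realizes C ys q))"

definition partial_elementary :: "('a, 'f, 'r) struc \<Rightarrow> 'a set \<Rightarrow> ('a \<Rightarrow> 'a) \<Rightarrow> bool" where
  "partial_elementary C A g \<longleftrightarrow> A \<subseteq> univ C \<and> g ` A \<subseteq> univ C \<and>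
     (\<forall>\<phi> xs. set xs \<subseteq> A \<longrightarrow> fv \<phi> \<subseteq> {..<length xs} \<longrightarrow>
        (sat C (lenv xs) \<phi> \<longleftrightarrow> sat C (lenv (map g xs)) \<phi>))"

definition automorphism :: "('a, 'f, 'r) struc \<Rightarrow> ('a \<Rightarrow> 'a) \<Rightarrow> bool" where
  "automorphism C g \<longleftrightarrow> bij_betw g (univ C) (univ C) \<and>
     (\<forall>f xs. set xs \<subseteq> univ C \<longrightarrow> g (funs C f xs) = funs C f (map g xs)) \<and>
     (\<forall>r xs. set xs \<subseteq> univ C \<longrightarrow> (rels C r xs \<longleftrightarrow> rels C r (map g xs)))"

text \<open>C is a monster model with respect to the (large, infinite) cardinal |K| > |L|:
  |K|-saturated and strongly |K|-homogeneous.\<close>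
definition monster :: "('a, 'f, 'r) struc \<Rightarrow> 'k set \<Rightarrow> bool" where
  "monster C K \<longleftrightarrow> is_structure C \<and> infinite K \<and> small K (UNIV :: ('f, 'r) fml set) \<and>
     (\<forall>A n p. A \<subseteq> univ C \<longrightarrow> small K A \<longrightarrow> fs_partial_type C n A p \<longrightarrow>
        (\<exists>ys. length ys = n \<and> set ys \<subseteq> univ C \<and> realizes C ys p)) \<and>
     (\<forall>A g. small K A \<longrightarrow> partial_elementary C A g \<longrightarrow>
        (\<exists>h. automorphism C h \<and> (\<forall>x\<in>A. h x = g x)))"

definition small_model :: "('a, 'f, 'r) struc \<Rightarrow> 'k set \<Rightarrow> 'a set \<Rightarrow> bool" where
  "small_model C K M \<longleftrightarrow> elem_sub C M \<and> small K M"

definition fs_dichotomy :: "('a, 'f, 'r) struc \<Rightarrow> 'k set \<Rightarrow> bool" where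
  "fs_dichotomy C K \<longleftrightarrow>
     (\<forall>M as bs. small_model C K M \<longrightarrow> set as \<subseteq> univ C \<longrightarrow> set bs \<subseteq> univ C \<longrightarrow>
        fin_sat C M bs (M \<union> set as) \<longrightarrow>
        (\<forall>c\<in>univ C. fin_sat C M bs (M \<union> set as \<union> {c}) \<or> fin_sat C M (bs @ [c]) (M \<union> set as)))"

text \<open>S_n(M): complete n-types over M consistent with Th(C_M).\<close>
definition Stypes :: "('a, 'f, 'r) struc \<Rightarrow> nat \<Rightarrow> 'a set \<Rightarrow> (('f, 'r) fml \<times> 'a list) set set" where
  "Stypes C n M = {p. fs_partial_type C n M p \<and>
     (\<forall>(\<phi>, ps)\<in>lformulas n M. (\<phi>, ps) \<in> p \<or> (Neg \<phi>, ps) \<in> p)}"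

definition full :: "('a, 'f, 'r) struc \<Rightarrow> 'a set \<Rightarrow> 'a set \<Rightarrow> bool" where
  "full C M D \<longleftrightarrow> M \<subseteq> D \<and> D \<subseteq> univ C \<and>
     (\<forall>n. \<forall>p\<in>Stypes C n M. \<exists>ys. length ys = n \<and> set ys \<subseteq> D \<and> realizes C ys p)"

end

theory Submission
  imports Defs
begin

fun ren_trm :: "(nat \<Rightarrow> nat) \<Rightarrow> 'f trm \<Rightarrow> 'f trm" where
  "ren_trm r (Var i) = Var (r i)"
| "ren_trm r (Fn f ts) = Fn f (map (ren_trm r) ts)"

fun ren :: "(nat \<Rightarrow> nat) \<Rightarrow> ('f,'r) fml \<Rightarrow> ('f,'r) fml" where
  "ren r FTrue = FTrue"
| "ren r (Eq s t) = Eq (ren_trm r s) (ren_trm r t)"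
| "ren r (Rel R ts) = Rel R (map (ren_trm r) ts)"
| "ren r (Neg \<phi>) = Neg (ren r \<phi>)"
| "ren r (Conj \<phi> \<psi>) = Conj (ren r \<phi>) (ren r \<psi>)"
| "ren r (Ex x \<phi>) = Ex (r x) (ren r \<phi>)"

lemma eval_ren: "eval S e (ren_trm r t) = eval S (e o r) t"
  by (induction t) (auto cong: map_cong)

lemma fv_trm_ren: "fv_trm (ren_trm r t) = r ` fv_trm t"
  by (induction t) auto

lemma fv_ren: "inj r \<Longrightarrow> fv (ren r \<phi>) = r ` fv \<phi>"
  by (induction \<phi>) (auto simp: fv_trm_ren image_Un image_UN inj_eq)

lemma sat_ren: "inj r \<Longrightarrow> sat S e (ren r \<phi>) = sat S (e o r) \<phi>"
proof (induction \<phi> arbitrary: e)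
  case (Ex x \<phi>)
  have "\<And>a. (e(r x := a)) o r = (e o r)(x := a)"
    using Ex.prems by (auto simp: inj_eq)
  have "sat S e (ren r (Ex x \<phi>)) = (\<exists>a\<in>univ S. sat S (e(r x:=a)) (ren r \<phi>))" by simp
  also have "\<dots> = (\<exists>a\<in>univ S. sat S ((e o r)(x:=a)) \<phi>)"
    using Ex.IH[OF Ex.prems] by (simp only: \<open>\<And>a. (e(r x := a)) o r = (e o r)(x := a)\<close>)
  finally show ?case by (simp only: sat.simps)
qed (auto simp: eval_ren comp_def)

lemma eval_cong: "(\<forall>i\<in>fv_trm t. e i = e' i) \<Longrightarrow> eval S e t = eval S e' t"
  by (induction t) (auto cong: map_cong)

lemma sat_cong: "(\<forall>i\<in>fv \<phi>. e i = e' i) \<Longrightarrow> sat S e \<phi> = sat S e' \<phi>"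
proof (induction \<phi> arbitrary: e e')
  case (Eq s t) then show ?case using eval_cong[of s e e' S] eval_cong[of t e e' S] by auto
next
  case (Rel R ts)
  have "map (eval S e) ts = map (eval S e') ts"
    by (rule map_cong[OF refl]) (use Rel.prems in \<open>auto intro: eval_cong\<close>)
  then show ?case by (simp only: sat.simps)
next
  case (Conj \<phi>1 \<phi>2)
  have "sat S e \<phi>1 = sat S e' \<phi>1" by (rule Conj.IH(1)) (use Conj.prems in auto)
  moreover have "sat S e \<phi>2 = sat S e' \<phi>2" by (rule Conj.IH(2)) (use Conj.prems in auto)
  ultimately show ?case by simp
next
  case (Ex x \<phi>)
  have "\<And>a. sat S (e(x:=a)) \<phi> = sat S (e'(x:=a)) \<phi>"
    using Ex.IH Ex.prems by auto
  then show ?case by simp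
qed auto

lemma sat_ren_lenv:
  assumes "inj \<rho>" "fv \<phi> \<subseteq> {..<N}" "\<forall>i<N. lenv L (\<rho> i) = lenv L' i"
  shows "sat S (lenv L) (ren \<rho> \<phi>) = sat S (lenv L') \<phi>"
proof -
  have "sat S (lenv L) (ren \<rho> \<phi>) = sat S (lenv L o \<rho>) \<phi>" using sat_ren[OF assms(1)] .
  also have "\<dots> = sat S (lenv L') \<phi>" by (rule sat_cong) (use assms in auto)
  finally show ?thesis .
qed

lemma fv_ren_sub:
  assumes "inj \<rho>" "fv \<phi> \<subseteq> {..<N}" "\<forall>i<N. \<rho> i < N'"
  shows "fv (ren \<rho> \<phi>) \<subseteq> {..<N'}"
  using assms by (auto simp: fv_ren[OF assms(1)])

lemma lenv_nth: "i < length xs \<Longrightarrow> lenv xs i = xs ! i"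
  by (simp add: lenv_def)

lemma fs_mono: "B' \<subseteq> B \<Longrightarrow> fin_sat C M xs B \<Longrightarrow> fin_sat C M xs B'"
  unfolding fin_sat_def tp_def lformulas_def by blast

lemma fs_nil: "fin_sat C M [] B"
  unfolding fin_sat_def tp_def by auto

lemma fs_local: "(\<And>ps. set ps \<subseteq> B \<Longrightarrow> fin_sat C M xs (M \<union> set ps)) \<Longrightarrow> fin_sat C M xs B"
  unfolding fin_sat_def tp_def lformulas_def by fastforce

lemma fs_proj:
  assumes "distinct idx" "\<forall>j\<in>set idx. j < length xs" "fin_sat C M xs B"
  shows "fin_sat C M (map ((!) xs) idx) B"
  unfolding fin_sat_def
proof (clarify)
  fix \<phi> ps assume H: "(\<phi>, ps) \<in> tp C (map ((!) xs) idx) B"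
  define m where "m = length idx"
  define n where "n = length xs"
  define \<rho> where "\<rho> i = (if i < m then idx!i else i - m + n)" for i
  have bnd: "idx ! k < n" if "k < m" for k
    using assms(2) that unfolding m_def n_def by auto
  have inj: "inj \<rho>"
  proof (rule injI)
    fix i j assume "\<rho> i = \<rho> j"
    then show "i = j" using assms(1) unfolding \<rho>_def
    proof (cases "i < m"; cases "j < m")
      assume "i < m" "j < m" "(if i < m then idx ! i else i - m + n) = (if j < m then idx ! j else j - m + n)"
      then show "i = j" using assms(1) by (simp add: nth_eq_iff_index_eq m_def)
    qed (auto dest!: bnd)
  qed
  have key: "lenv (L @ ps) (\<rho> i) = lenv (map ((!) L) idx @ ps) i"
    if "length L = n" "i < m + length ps" for L i
    using that bnd[of i] unfolding \<rho>_def
    by (auto simp: lenv_def nth_append m_def n_def)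
  from H have fv: "fv \<phi> \<subseteq> {..<m + length ps}" and ps: "set ps \<subseteq> B"
    and sat: "sat C (lenv (map ((!) xs) idx @ ps)) \<phi>"
    unfolding tp_def lformulas_def m_def by auto
  have "(ren \<rho> \<phi>, ps) \<in> tp C xs B"
  proof -
    have "fv (ren \<rho> \<phi>) \<subseteq> {..<length xs + length ps}"
      by (rule fv_ren_sub[OF inj fv]) (use bnd in \<open>fastforce simp: \<rho>_def n_def\<close>)
    moreover have "sat C (lenv (xs @ ps)) (ren \<rho> \<phi>)"
      using sat sat_ren_lenv[OF inj fv, of "xs @ ps" "map ((!) xs) idx @ ps"] key[of xs] n_def by auto
    ultimately show ?thesis using ps unfolding tp_def lformulas_def by auto
  qed
  then obtain ys where ys: "length ys = n" "set ys \<subseteq> M" "sat C (lenv (ys @ ps)) (ren \<rho> \<phi>)"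
    using assms(3) unfolding fin_sat_def n_def by fastforce
  have "sat C (lenv (map ((!) ys) idx @ ps)) \<phi>"
    using ys(3) sat_ren_lenv[OF inj fv, of "ys @ ps" "map ((!) ys) idx @ ps"] key[of ys] ys(1) by auto
  moreover have "set (map ((!) ys) idx) \<subseteq> M"
    using ys(1,2) assms(2) unfolding n_def by (auto intro!: subsetD[OF ys(2)] nth_mem)
  ultimately show "\<exists>ys. length ys = length (map ((!) xs) idx) \<and> set ys \<subseteq> M \<and> sat C (lenv (ys @ ps)) \<phi>"
    by (intro exI[of _ "map ((!) ys) idx"]) auto
qed

lemma fs_trans:
  assumes "M \<subseteq> B" "fin_sat C M xs (B \<union> {c})" "fin_sat C M [c] B"
  shows "fin_sat C M (xs @ [c]) B"
  unfolding fin_sat_def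
proof (clarify)
  fix \<phi> ps assume H: "(\<phi>, ps) \<in> tp C (xs @ [c]) B"
  define n where "n = length xs"
  from H have fv: "fv \<phi> \<subseteq> {..<n + 1 + length ps}" and ps: "set ps \<subseteq> B"
    and sat: "sat C (lenv (xs @ c # ps)) \<phi>"
    unfolding tp_def lformulas_def n_def by auto
  have "(\<phi>, c # ps) \<in> tp C xs (B \<union> {c})"
    using fv ps sat unfolding tp_def lformulas_def n_def by auto
  then obtain ys where ys: "length ys = n" "set ys \<subseteq> M" "sat C (lenv (ys @ c # ps)) \<phi>"
    using assms(2) unfolding fin_sat_def n_def by fastforce
  define \<rho> where "\<rho> i = (if i < n then Suc i else if i = n then 0 else i)" for i
  have inj: "inj \<rho>" by (rule injI) (auto simp: \<rho>_def split: if_splits)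
  have key: "lenv (d # L @ ps) (\<rho> i) = lenv (L @ d # ps) i" if "length L = n" for L d i
    using that unfolding \<rho>_def lenv_def
    by (auto simp: nth_append nth_Cons' split: if_splits)
  have fv': "fv (ren \<rho> \<phi>) \<subseteq> {..<1 + length (ys @ ps)}"
    by (rule fv_ren_sub[OF inj fv]) (auto simp: \<rho>_def ys(1))
  have "(ren \<rho> \<phi>, ys @ ps) \<in> tp C [c] B"
    using fv' ys(2) ps assms(1) sat_ren_lenv[OF inj fv, of "c # ys @ ps" "ys @ c # ps"] key[OF ys(1)] ys(3)
    unfolding tp_def lformulas_def by auto
  then obtain zs where zs: "length zs = 1" "set zs \<subseteq> M" "sat C (lenv (zs @ ys @ ps)) (ren \<rho> \<phi>)"
    using assms(3) unfolding fin_sat_def by fastforce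
  then obtain m where m: "zs = [m]" by (cases zs) auto
  have "sat C (lenv (ys @ m # ps)) \<phi>"
    using zs(3) m sat_ren_lenv[OF inj fv, of "m # ys @ ps" "ys @ m # ps"] key[OF ys(1)] by auto
  then show "\<exists>ws. length ws = length (xs @ [c]) \<and> set ws \<subseteq> M \<and> sat C (lenv (ws @ ps)) \<phi>"
    using ys zs m n_def by (intro exI[of _ "ys @ [m]"]) auto
qed

lemma dich_use:
  assumes "fs_dichotomy C K" "small_model C K M" "set P \<subseteq> univ C" "set xs \<subseteq> univ C"
    "c \<in> univ C" "fin_sat C M xs (M \<union> set P)"
  shows "fin_sat C M xs (M \<union> set P \<union> {c}) \<or> fin_sat C M (xs @ [c]) (M \<union> set P)"
proof -
  have "\<forall>M as bs. small_model C K M \<longrightarrow> set as \<subseteq> univ C \<longrightarrow> set bs \<subseteq> univ C \<longrightarrow>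
        fin_sat C M bs (M \<union> set as) \<longrightarrow>
        (\<forall>c\<in>univ C. fin_sat C M bs (M \<union> set as \<union> {c}) \<or> fin_sat C M (bs @ [c]) (M \<union> set as))"
    using assms(1) unfolding fs_dichotomy_def .
  then have "\<forall>c\<in>univ C. fin_sat C M xs (M \<union> set P \<union> {c}) \<or> fin_sat C M (xs @ [c]) (M \<union> set P)"
    using assms(2,3,4,6) by blast
  then show ?thesis using assms(5) by blast
qed

lemma fs_G2:
  assumes dich: "fs_dichotomy C K" and sm: "small_model C K M"
    and P: "set P \<subseteq> univ C" and as: "set as \<subseteq> univ C"
    and each: "\<forall>a\<in>set as. fin_sat C M [a] (M \<union> set P)"
  shows "fin_sat C M as (M \<union> set P)"
  using as each
proof (induction as rule: rev_induct)
  case Nil then show ?case by (simp add: fs_nil)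
next
  case (snoc x xs)
  have IH: "fin_sat C M xs (M \<union> set P)" using snoc by auto
  have x: "x \<in> univ C" "fin_sat C M [x] (M \<union> set P)" using snoc by auto
  have "fin_sat C M xs (M \<union> set P \<union> {x}) \<or> fin_sat C M (xs @ [x]) (M \<union> set P)"
    using dich sm P snoc.prems(1) IH x(1) unfolding fs_dichotomy_def by auto
  then show ?case
  proof
    assume "fin_sat C M xs (M \<union> set P \<union> {x})"
    then show ?thesis using fs_trans[of M "M \<union> set P" C xs x] x(2) by auto
  qed
qed

definition fixv :: "nat \<Rightarrow> nat \<Rightarrow> ('f,'r) fml \<Rightarrow> ('f,'r) fml" where
  "fixv j k \<phi> = Ex j (Conj (Eq (Var j) (Var k)) \<phi>)"

fun fixall :: "nat list \<Rightarrow> nat \<Rightarrow> ('f,'r) fml \<Rightarrow> ('f,'r) fml" where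
  "fixall [] k \<phi> = \<phi>"
| "fixall (j # js) k \<phi> = fixv j k (fixall js k \<phi>)"

lemma fv_fixall: "fv (fixall js k \<phi>) \<subseteq> fv \<phi> \<union> {k}"
  by (induction js) (auto simp: fixv_def)

lemma sat_fixall:
  "k \<notin> set js \<Longrightarrow> e k \<in> univ S \<Longrightarrow>
   sat S e (fixall js k \<phi>) = sat S (\<lambda>i. if i \<in> set js then e k else e i) \<phi>"
proof (induction js arbitrary: e)
  case Nil then show ?case by simp
next
  case (Cons j js)
  have jk: "j \<noteq> k" using Cons.prems by auto
  have "sat S e (fixall (j # js) k \<phi>) = sat S (e(j := e k)) (fixall js k \<phi>)"
    using jk Cons.prems(2) by (auto simp: fixv_def)
  also have "\<dots> = sat S (\<lambda>i. if i \<in> set js then (e(j := e k)) k else (e(j := e k)) i) \<phi>"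
    by (rule Cons.IH) (use Cons.prems jk in auto)
  also have "(\<lambda>i. if i \<in> set js then (e(j := e k)) k else (e(j := e k)) i)
     = (\<lambda>i. if i \<in> set (j # js) then e k else e i)"
    using jk by auto
  finally show ?case .
qed

lemma fs_swap:
  assumes fs2: "fin_sat C M [a, b] (M \<union> set ps' \<union> set qs)"
    and real: "realizes C qs (tp C ps' M)" and len: "length qs = length ps'"
    and R: "set R \<subseteq> M" and fv: "fv \<chi> \<subseteq> {..<2 + length ps' + length R}"
    and sat: "sat C (lenv (a # b # ps' @ R)) \<chi>"
  shows "sat C (lenv (a # b # qs @ R)) \<chi>"
proof (rule ccontr)
  assume nsat: "\<not> sat C (lenv (a # b # qs @ R)) \<chi>"
  define n where "n = length ps'"
  define r where "r = length R"
  define \<sigma> where "\<sigma> i = (if i < 2 then i else if i < 2 + n then i + n + r else if i < 2 + n + r then i else i + n)" for i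
  have inj\<sigma>: "inj \<sigma>" by (rule injI) (auto simp: \<sigma>_def split: if_splits)
  have k1: "lenv (u # v # ps' @ R @ L) (\<sigma> i) = lenv (u # v # L @ R) i"
    if "length L = n" "i < 2 + n + r" for u v L i
    using that unfolding \<sigma>_def lenv_def n_def r_def
    by (auto simp: nth_append nth_Cons' numeral_2_eq_2 split: if_splits)
  have k2: "lenv (u # v # ps' @ R @ L) i = lenv (u # v # ps' @ R) i"
    if "i < 2 + n + r" for u v L i
    using that unfolding lenv_def n_def r_def
    by (auto simp: nth_append nth_Cons')
  have fv1: "fv \<chi> \<subseteq> {..<2 + n + r}" using fv n_def r_def by simp
  have sat1: "sat C (lenv (u # v # ps' @ R @ L)) (ren \<sigma> \<chi>) = sat C (lenv (u # v # L @ R)) \<chi>"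
    if "length L = n" for u v L
    using sat_ren_lenv[OF inj\<sigma> fv1] k1[OF that] by blast
  have sat2: "sat C (lenv (u # v # ps' @ R @ L)) \<chi> = sat C (lenv (u # v # ps' @ R)) \<chi>" for u v L
    by (rule sat_cong) (use fv1 k2 in auto)
  define \<Phi> where "\<Phi> = Conj \<chi> (Neg (ren \<sigma> \<chi>))"
  have fvren: "fv (ren \<sigma> \<chi>) \<subseteq> {..<2 + (n + r + n)}"
    by (rule fv_ren_sub[OF inj\<sigma> fv1]) (auto simp: \<sigma>_def)
  have "(\<Phi>, ps' @ R @ qs) \<in> tp C [a, b] (M \<union> set ps' \<union> set qs)"
    unfolding tp_def lformulas_def \<Phi>_def
    using fv1 fvren R sat nsat sat1[of qs a b] sat2[of a b qs] len n_def r_def by auto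
  then have "\<exists>zs. length zs = length [a, b] \<and> set zs \<subseteq> M \<and> sat C (lenv (zs @ ps' @ R @ qs)) \<Phi>"
    using fs2 unfolding fin_sat_def by blast
  then obtain zs where zs: "length zs = Suc (Suc 0)" "set zs \<subseteq> M" "sat C (lenv (zs @ ps' @ R @ qs)) \<Phi>"
    by auto
  then obtain m m' where m: "zs = [m, m']"
    by (cases zs; cases "tl zs") auto
  have A: "sat C (lenv (m # m' # ps' @ R)) \<chi>" and B: "\<not> sat C (lenv (m # m' # qs @ R)) \<chi>"
    using zs(3) m sat1[of qs m m'] sat2[of m m' qs] len n_def unfolding \<Phi>_def by auto
  define \<tau> where "\<tau> i = (if i < 2 then n + i else if i < 2 + n then i - 2 else i)" for i
  have inj\<tau>: "inj \<tau>" by (rule injI) (auto simp: \<tau>_def split: if_splits)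
  have k3: "lenv (L @ m # m' # R) (\<tau> i) = lenv (m # m' # L @ R) i"
    if "length L = n" "i < 2 + n + r" for L i
    using that unfolding \<tau>_def lenv_def r_def
    by (auto simp: nth_append nth_Cons' numeral_2_eq_2 split: if_splits)
  have sat3: "sat C (lenv (L @ m # m' # R)) (ren \<tau> \<chi>) = sat C (lenv (m # m' # L @ R)) \<chi>"
    if "length L = n" for L
    using sat_ren_lenv[OF inj\<tau> fv1] k3[OF that] by blast
  have fvt: "fv (ren \<tau> \<chi>) \<subseteq> {..<n + length (m # m' # R)}"
    by (rule fv_ren_sub[OF inj\<tau> fv1]) (auto simp: \<tau>_def r_def)
  have "(ren \<tau> \<chi>, m # m' # R) \<in> tp C ps' M"
    unfolding tp_def lformulas_def using fvt zs(2) m R A sat3[of ps'] n_def by auto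
  then have "sat C (lenv (qs @ m # m' # R)) (ren \<tau> \<chi>)"
    using real unfolding realizes_def by auto
  then show False using B sat3[of qs] len n_def by auto
qed

lemma fs_swap_iff:
  assumes fs2: "fin_sat C M [a, b] (M \<union> set ps' \<union> set qs)"
    and real: "realizes C qs (tp C ps' M)" and len: "length qs = length ps'"
    and R: "set R \<subseteq> M" and fv: "fv \<chi> \<subseteq> {..<2 + length ps' + length R}"
  shows "sat C (lenv (a # b # ps' @ R)) \<chi> = sat C (lenv (a # b # qs @ R)) \<chi>"
  using fs_swap[OF assms] fs_swap[OF assms(1-4), of "Neg \<chi>"] fv by auto

lemma tp_Stypes:
  assumes "set ps \<subseteq> univ C"
  shows "tp C ps M \<in> Stypes C (length ps) M"
proof -
  have 1: "tp C ps M \<subseteq> lformulas (length ps) M" unfolding tp_def by auto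
  have 2: "\<forall>q\<subseteq>tp C ps M. finite q \<longrightarrow> (\<exists>ys. length ys = length ps \<and> set ys \<subseteq> univ C \<and> realizes C ys q)"
    using assms unfolding realizes_def tp_def by blast
  have 3: "\<forall>(\<phi>, qs)\<in>lformulas (length ps) M. (\<phi>, qs) \<in> tp C ps M \<or> (Neg \<phi>, qs) \<in> tp C ps M"
    unfolding tp_def lformulas_def by auto
  show ?thesis unfolding Stypes_def fs_partial_type_def using 1 2 3 by blast
qed

lemma fs_K:
  assumes dich: "fs_dichotomy C K" and sm: "small_model C K M" and full: "full C M D"
    and a: "a \<in> univ C" and B1: "set B1 \<subseteq> univ C" and b2: "b2 \<in> univ C"
    and h1: "fin_sat C M [a] (D \<union> set B1)" and h2: "fin_sat C M [a] (D \<union> {b2})"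
  shows "fin_sat C M [a] (D \<union> set B1 \<union> {b2})"
  unfolding fin_sat_def
proof (clarify, rule ccontr)
  fix \<theta> ps assume H: "(\<theta>, ps) \<in> tp C [a] (D \<union> set B1 \<union> {b2})"
  assume nw: "\<nexists>ys. length ys = length [a] \<and> set ys \<subseteq> M \<and> sat C (lenv (ys @ ps)) \<theta>"
  then have nw': "\<not> sat C (lenv (m # ps)) \<theta>" if "m \<in> M" for m
    using that by (metis One_nat_def append_Cons append_Nil empty_subsetI insert_subset length_Cons list.size(3) list.set(1) list.set(2))
  have MD: "M \<subseteq> D" "D \<subseteq> univ C" using full unfolding full_def by auto
  have Mne: "M \<noteq> {}" using sm unfolding small_model_def elem_sub_def by auto
  then obtain m0 where m0: "m0 \<in> M" by auto
  define n where "n = length ps"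
  from H have fv: "fv \<theta> \<subseteq> {..<1 + n}" and ps: "set ps \<subseteq> D \<union> set B1 \<union> {b2}"
    and sat: "sat C (lenv (a # ps)) \<theta>"
    unfolding tp_def lformulas_def n_def by auto
  define f where "f v p = (if p = b2 then v else p)" for v p
  define ps' where "ps' = map (f m0) ps"
  have lps': "length ps' = n" by (simp add: ps'_def n_def)
  have ps'D: "set ps' \<subseteq> D \<union> set B1" using ps m0 MD unfolding ps'_def f_def by auto
  have ps'U: "set ps' \<subseteq> univ C" using ps'D MD B1 by auto
  have psU: "set ps \<subseteq> univ C" using ps MD B1 b2 by auto
  have mapid: "map (f b2) ps = ps" by (rule map_idI) (simp add: f_def)
  define J where "J = map (\<lambda>j. j + 2) (filter (\<lambda>j. ps ! j = b2) [0..<n])"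
  have J: "i \<in> set J \<longleftrightarrow> (\<exists>j<n. i = j + 2 \<and> ps ! j = b2)" for i
    unfolding J_def by auto
  define \<rho> where "\<rho> i = (if i = 0 then 0 else Suc i)" for i
  have inj\<rho>: "inj \<rho>" by (rule injI) (auto simp: \<rho>_def split: if_splits)
  define \<psi> where "\<psi> = fixall J 1 (ren \<rho> \<theta>)"
  have fv\<psi>: "fv \<psi> \<subseteq> {..<2 + n}"
  proof -
    have "fv (ren \<rho> \<theta>) \<subseteq> {..<2 + n}"
      by (rule fv_ren_sub[OF inj\<rho> fv]) (auto simp: \<rho>_def)
    then show ?thesis using fv_fixall[of J 1 "ren \<rho> \<theta>"] unfolding \<psi>_def by auto
  qed
  have S: "sat C (lenv (u # v # ps')) \<psi> = sat C (lenv (u # map (f v) ps)) \<theta>"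
    if v: "v \<in> univ C" for u v
  proof -
    define E where "E i = (if i \<in> set J then lenv (u # v # ps') 1 else lenv (u # v # ps') i)" for i
    have "1 \<notin> set J" using J by auto
    moreover have "lenv (u # v # ps') 1 \<in> univ C" using v by (simp add: lenv_def)
    ultimately have "sat C (lenv (u # v # ps')) \<psi> = sat C E (ren \<rho> \<theta>)"
      unfolding \<psi>_def E_def by (rule sat_fixall)
    also have "\<dots> = sat C (E o \<rho>) \<theta>" by (rule sat_ren[OF inj\<rho>])
    also have "\<dots> = sat C (lenv (u # map (f v) ps)) \<theta>"
    proof (rule sat_cong, intro ballI)
      fix i assume "i \<in> fv \<theta>"
      then have i: "i < 1 + n" using fv by auto
      show "(E o \<rho>) i = lenv (u # map (f v) ps) i"
      proof (cases i)
        case 0 then show ?thesis using J by (simp add: E_def \<rho>_def lenv_def)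
      next
        case (Suc j)
        then have jn: "j < n" using i by simp
        show ?thesis
        proof (cases "ps ! j = b2")
          case True
          then have "j + 2 \<in> set J" using J jn by blast
          then show ?thesis using Suc jn True
            by (simp add: E_def \<rho>_def lenv_def f_def n_def)
        next
          case False
          then have "j + 2 \<notin> set J" using J jn by auto
          then show ?thesis using Suc jn False lps'
            by (simp add: E_def \<rho>_def lenv_def f_def n_def ps'_def)
        qed
      qed
    qed
    finally show ?thesis .
  qed
  have A1: "sat C (lenv (a # b2 # ps')) \<psi>" using S[OF b2] sat mapid by simp
  have A2: "\<not> sat C (lenv (m # b2 # ps')) \<psi>" if "m \<in> M" for m
    using S[OF b2] nw'[OF that] mapid by simp
  obtain qs where qs: "length qs = n" "set qs \<subseteq> D" "realizes C qs (tp C ps' M)"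
    using full tp_Stypes[OF ps'U, of M] lps' unfolding full_def by metis
  define Q where "Q = ps' @ qs"
  have QU: "set Q \<subseteq> univ C" using ps'U qs(2) MD unfolding Q_def by auto
  have "fin_sat C M [a] (M \<union> set Q)"
    by (rule fs_mono[OF _ h1]) (use MD ps'D qs(2) in \<open>auto simp: Q_def\<close>)
  then have "fin_sat C M [a] (M \<union> set Q \<union> {b2}) \<or> fin_sat C M ([a] @ [b2]) (M \<union> set Q)"
    using dich_use[OF dich sm QU _ b2, of "[a]"] a by simp
  then show False
  proof
    assume c1: "fin_sat C M [a] (M \<union> set Q \<union> {b2})"
    have "set ps \<subseteq> M \<union> set Q \<union> {b2}"
    proof
      fix p assume "p \<in> set ps"
      then show "p \<in> M \<union> set Q \<union> {b2}"
        by (cases "p = b2") (auto simp: Q_def ps'_def f_def intro: rev_image_eqI)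
    qed
    then have "(\<theta>, ps) \<in> tp C [a] (M \<union> set Q \<union> {b2})"
      using fv sat unfolding tp_def lformulas_def n_def by auto
    then show False using c1 nw unfolding fin_sat_def by fastforce
  next
    assume c2: "fin_sat C M ([a] @ [b2]) (M \<union> set Q)"
    then have fs2: "fin_sat C M [a, b2] (M \<union> set ps' \<union> set qs)" by (simp add: Q_def Un_assoc)
    have lq: "length qs = length ps'" using qs(1) lps' by simp
    have "sat C (lenv (a # b2 # qs @ [])) \<psi>"
      using fs_swap[OF fs2 qs(3) lq, of "[]" \<psi>] A1 fv\<psi> lps' by simp
    then have "(\<psi>, b2 # qs) \<in> tp C [a] (D \<union> {b2})"
      using fv\<psi> qs unfolding tp_def lformulas_def by auto
    then obtain m where m: "m \<in> M" "sat C (lenv (m # b2 # qs)) \<psi>"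
      using h2 unfolding fin_sat_def
      by (smt (verit) append_Cons append_Nil case_prodD length_0_conv length_Suc_conv list.set_intros(1) subset_iff)
    define \<pi> where "\<pi> i = (if i = 0 then 2 + n else if i < 2 + n then i else Suc i)" for i
    have inj\<pi>: "inj \<pi>" by (rule injI) (auto simp: \<pi>_def split: if_splits)
    have k: "lenv (u # v # L @ [m]) (\<pi> i) = lenv (m # v # L) i" if "length L = n" "i < 2 + n" for u v L i
      using that unfolding \<pi>_def lenv_def by (auto simp: nth_append nth_Cons' numeral_2_eq_2)
    have sp: "sat C (lenv (u # v # L @ [m])) (ren \<pi> \<psi>) = sat C (lenv (m # v # L)) \<psi>"
      if "length L = n" for u v L
      using sat_ren_lenv[OF inj\<pi> fv\<psi>] k[OF that] by blast
    have fvp: "fv (ren \<pi> \<psi>) \<subseteq> {..<2 + length ps' + length [m]}"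
      by (rule fv_ren_sub[OF inj\<pi> fv\<psi>]) (auto simp: \<pi>_def lps')
    have "sat C (lenv (a # b2 # ps' @ [m])) (ren \<pi> \<psi>) = sat C (lenv (a # b2 # qs @ [m])) (ren \<pi> \<psi>)"
      by (rule fs_swap_iff[OF fs2 qs(3) lq _ fvp]) (use m in auto)
    then show False using sp[of ps'] sp[of qs] lps' qs(1) A2[OF m(1)] m(2) by auto
  qed
qed

lemma fs_Kall:
  assumes dich: "fs_dichotomy C K" and sm: "small_model C K M" and full: "full C M D"
    and a: "a \<in> univ C"
  shows "set bs \<subseteq> univ C \<Longrightarrow> bs \<noteq> [] \<Longrightarrow> \<forall>b\<in>set bs. fin_sat C M [a] (D \<union> {b})
     \<Longrightarrow> fin_sat C M [a] (D \<union> set bs)"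
proof (induction bs)
  case Nil then show ?case by simp
next
  case (Cons b bs)
  show ?case
  proof (cases "bs = []")
    case True then show ?thesis using Cons.prems by simp
  next
    case False
    then have "fin_sat C M [a] (D \<union> set bs)" using Cons by auto
    then have "fin_sat C M [a] (D \<union> set bs \<union> {b})"
      using fs_K[OF dich sm full a _ _ _, of bs b] Cons.prems by auto
    then show ?thesis by (simp add: Un_commute Un_left_commute insert_commute)
  qed
qed

theorem lemma3:
  fixes C :: "('a, 'f, 'r) struc" and K :: "'k set"
    and M :: "'a set" and as bs :: "'a list" and c :: 'a
  assumes "monster C K"
    and "fs_dichotomy C K"
    and "small_model C K M"
    and "set as \<subseteq> univ C" and "set bs \<subseteq> univ C" and "c \<in> univ C"
  shows "(\<not> fin_sat C M as (M \<union> {c}) \<and> \<not> fin_sat C M [c] (M \<union> set bs)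
            \<longrightarrow> \<not> fin_sat C M as (M \<union> set bs))
       \<and> (fin_sat C M as (M \<union> set bs) \<longleftrightarrow> (\<forall>a\<in>set as. fin_sat C M [a] (M \<union> set bs)))
       \<and> (\<forall>D. full C M D \<longrightarrow> bs \<noteq> [] \<longrightarrow>
            (fin_sat C M as (D \<union> set bs) \<longleftrightarrow>
             (\<forall>a\<in>set as. \<forall>b\<in>set bs. fin_sat C M [a] (D \<union> {b}))))"
proof (intro conjI impI allI)
  note dich = assms(2) and sm = assms(3)
  have proj1: "fin_sat C M [a] B" if t1: "fin_sat C M as B" and t2: "a \<in> set as" for a B
  proof -
    obtain k where k: "k < length as" "as ! k = a" using t2 by (auto simp: in_set_conv_nth)
    have "fin_sat C M (map ((!) as) [k]) B" by (rule fs_proj) (use k t1 in auto)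
    then show ?thesis using k by simp
  qed
  {
    assume H: "\<not> fin_sat C M as (M \<union> {c}) \<and> \<not> fin_sat C M [c] (M \<union> set bs)"
    show "\<not> fin_sat C M as (M \<union> set bs)"
    proof
      assume f: "fin_sat C M as (M \<union> set bs)"
      from dich_use[OF dich sm assms(5) assms(4) assms(6) f]
      show False
      proof
        assume "fin_sat C M as (M \<union> set bs \<union> {c})"
        then have "fin_sat C M as (M \<union> {c})" by (rule fs_mono[rotated]) auto
        then show False using H by simp
      next
        assume "fin_sat C M (as @ [c]) (M \<union> set bs)"
        then have "fin_sat C M (map ((!) (as @ [c])) [length as]) (M \<union> set bs)"
          by (rule fs_proj[rotated 2]) auto
        then show False using H by simp
      qed
    qed
  }
  show "fin_sat C M as (M \<union> set bs) = (\<forall>a\<in>set as. fin_sat C M [a] (M \<union> set bs))"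
    using proj1 fs_G2[OF dich sm assms(5) assms(4)] by blast
  fix D assume full: "full C M D" and bne: "bs \<noteq> []"
  have MD: "M \<subseteq> D" "D \<subseteq> univ C" using full unfolding full_def by auto
  show "fin_sat C M as (D \<union> set bs) = (\<forall>a\<in>set as. \<forall>b\<in>set bs. fin_sat C M [a] (D \<union> {b}))"
  proof
    assume "fin_sat C M as (D \<union> set bs)"
    then show "\<forall>a\<in>set as. \<forall>b\<in>set bs. fin_sat C M [a] (D \<union> {b})"
      using proj1 fs_mono[of "D \<union> {_}" "D \<union> set bs" C M] by blast
  next
    assume H: "\<forall>a\<in>set as. \<forall>b\<in>set bs. fin_sat C M [a] (D \<union> {b})"
    have each: "fin_sat C M [a] (D \<union> set bs)" if "a \<in> set as" for a
      using fs_Kall[OF dich sm full _ assms(5) bne] H that assms(4) by auto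
    show "fin_sat C M as (D \<union> set bs)"
    proof (rule fs_local)
      fix ps assume ps: "set ps \<subseteq> D \<union> set bs"
      have psU: "set ps \<subseteq> univ C" using ps MD assms(5) by auto
      show "fin_sat C M as (M \<union> set ps)"
      proof (rule fs_G2[OF dich sm psU assms(4)], intro ballI)
        fix a assume "a \<in> set as"
        then show "fin_sat C M [a] (M \<union> set ps)"
          by (rule fs_mono[rotated, OF each]) (use ps MD in auto)
      qed
    qed
  qed
qed

end
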